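(* Let $\Theta=\{1,2\}$, let $(A,u)$ be a decision problem and let $P_1,\dots,P_m$ be experiments. Then $V(P_1,\dots,P_m;(A,u))=V(\overline P;(A,u))$, where $\overline P$ is a Blackwell supremum of $P_1,\dots,P_m$.
   Context: $\Theta$ is a finite set of states. A decision problem is a pair $(A,u)$ with $A$ a finite nonempty action set and $u:\Theta\times A\to\mathbb{R}$; for $\alpha\in\Delta(A)$ write $u(\theta,\alpha)=\sum_a\alpha(a)u(\theta,a)$. An experiment is a map $P:\Theta\to\Delta(Y)$ with $Y$ a finite signal set. Given experiments $P_j:\Theta\to\Delta(Y_j)$, $j=1,\dots,m$, let $\mathbf Y=Y_1\times\cdots\times Y_m$ and let $\mathcal P(P_1,\dots,P_m)$ be the set of experiments $P:\Theta\to\Delta(\mathbf Y)$ whose $j$-th marginal is $P_j(\cdot|\theta)$ for every $\theta$ and $j$. A strategy is a map $\sigma:\mathbf Y\to\Delta(A)$. Define $V(P_1,\dots,P_m;(A,u))=\max_{\sigma}\min_{P\in\mathcal P(P_1,\dots,P_m)}\sum_{\theta}\sum_{\mathbf y\in\mathbf Y}P(\mathbf y|\theta)u(\theta,\sigma(\mathbf y))$; for $m=1$ this is the usual value $V(P;(A,u))=\max_{\sigma:Y\to\Delta(A)}\sum_\theta\sum_y P(y|\theta)u(\theta,\sigma(y))$. An experiment $P$ is more informative than $Q$ if $V(P;(A,u))\ge V(Q;(A,u))$ for every decision problem. $R$ is a Blackwell supremum of $P_1,\dots,P_m$ if $R$ is more informative than each $P_j$ and every $S$ more informative than all $P_j$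 is more informative than $R$ (such a supremum exists when $|\Theta|=2$). *)

theory Defs
  imports Complex_Main "HOL-Library.FuncSet"
begin

text \<open>States form a finite type 's (Theta = UNIV). A probability distribution on a
finite set Y is given by a real weight function, nonnegative on Y and summing to 1 over Y.\<close>

definition is_dist :: "'y set \<Rightarrow> ('y \<Rightarrow> real) \<Rightarrow> bool" where
  "is_dist Y p \<longleftrightarrow> (\<forall>y\<in>Y. 0 \<le> p y) \<and> sum p Y = 1"

definition is_experiment :: "'y set \<Rightarrow> ('s \<Rightarrow> 'y \<Rightarrow> real) \<Rightarrow> bool" where
  "is_experiment Y P \<longleftrightarrow> finite Y \<and> (\<forall>\<theta>. is_dist Y (P \<theta>))"

definition strategies :: "'y set \<Rightarrow> 'a set \<Rightarrow> ('y \<Rightarrow> 'a \<Rightarrow> real) set" where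
  "strategies Y A = {\<sigma>. \<forall>y\<in>Y. is_dist A (\<sigma> y)}"

definition mixed_util :: "'a set \<Rightarrow> ('s \<Rightarrow> 'a \<Rightarrow> real) \<Rightarrow> 's \<Rightarrow> ('a \<Rightarrow> real) \<Rightarrow> real" where
  "mixed_util A u \<theta> \<alpha> = (\<Sum>a\<in>A. \<alpha> a * u \<theta> a)"

definition payoff :: "'y set \<Rightarrow> ('s::finite \<Rightarrow> 'y \<Rightarrow> real) \<Rightarrow> 'a set \<Rightarrow> ('s \<Rightarrow> 'a \<Rightarrow> real)
                      \<Rightarrow> ('y \<Rightarrow> 'a \<Rightarrow> real) \<Rightarrow> real" where
  "payoff Y P A u \<sigma> = (\<Sum>\<theta>\<in>UNIV. \<Sum>y\<in>Y. P \<theta> y * mixed_util A u \<theta> (\<sigma> y))"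

text \<open>Single-experiment value V(P;(A,u)) (the maximum is attained; written as a supremum).\<close>
definition value1 :: "'y set \<Rightarrow> ('s::finite \<Rightarrow> 'y \<Rightarrow> real) \<Rightarrow> 'a set \<Rightarrow> ('s \<Rightarrow> 'a \<Rightarrow> real) \<Rightarrow> real" where
  "value1 Y P A u = (SUP \<sigma>\<in>strategies Y A. payoff Y P A u \<sigma>)"

text \<open>Experiments P_1..P_m are indexed by j < m (i.e. j = 0..m-1), with signal sets Y j.
Joint signal set: the product PiE {..<m} Y.  Couplings: joint experiments whose
j-th marginal is P j.\<close>
definition couplings :: "nat \<Rightarrow> (nat \<Rightarrow> 'y set) \<Rightarrow> (nat \<Rightarrow> 's \<Rightarrow> 'y \<Rightarrow> real)
                         \<Rightarrow> ('s \<Rightarrow> (nat \<Rightarrow> 'y) \<Rightarrow> real) set" where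
  "couplings m Y P = {Q. (\<forall>\<theta>. is_dist (PiE {..<m} Y) (Q \<theta>)) \<and>
      (\<forall>\<theta>. \<forall>j<m. \<forall>y\<in>Y j. (\<Sum>ys\<in>{ys\<in>PiE {..<m} Y. ys j = y}. Q \<theta> ys) = P j \<theta> y)}"

definition valueM :: "nat \<Rightarrow> (nat \<Rightarrow> 'y set) \<Rightarrow> (nat \<Rightarrow> 's::finite \<Rightarrow> 'y \<Rightarrow> real)
                      \<Rightarrow> 'a set \<Rightarrow> ('s \<Rightarrow> 'a \<Rightarrow> real) \<Rightarrow> real" where
  "valueM m Y P A u = (SUP \<sigma>\<in>strategies (PiE {..<m} Y) A.
       INF Q\<in>couplings m Y P. payoff (PiE {..<m} Y) Q A u \<sigma>)"

text \<open>P more informative than Q: weakly higher value in every decision problem.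
Finite action sets are taken inside nat (every finite set embeds there).\<close>
definition more_informative :: "'y set \<Rightarrow> ('s::finite \<Rightarrow> 'y \<Rightarrow> real) \<Rightarrow> 'z set \<Rightarrow> ('s \<Rightarrow> 'z \<Rightarrow> real) \<Rightarrow> bool" where
  "more_informative Y P Z Q \<longleftrightarrow>
     (\<forall>(A::nat set) u. finite A \<and> A \<noteq> {} \<longrightarrow> value1 Y P A u \<ge> value1 Z Q A u)"

text \<open>Blackwell supremum; competing experiments S range over finite signal sets in nat
(every finite signal set embeds there).\<close>
definition blackwell_sup :: "nat \<Rightarrow> (nat \<Rightarrow> 'y set) \<Rightarrow> (nat \<Rightarrow> 's::finite \<Rightarrow> 'y \<Rightarrow> real)
                             \<Rightarrow> 'z set \<Rightarrow> ('s \<Rightarrow> 'z \<Rightarrow> real) \<Rightarrow> bool" where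
  "blackwell_sup m Y P Z R \<longleftrightarrow> is_experiment Z R \<and>
     (\<forall>j<m. more_informative Z R (Y j) (P j)) \<and>
     (\<forall>(W::nat set) S. is_experiment W S \<and> (\<forall>j<m. more_informative W S (Y j) (P j))
          \<longrightarrow> more_informative W S Z R)"

end

theory Submission
  imports Defs "HOL-Analysis.Analysis"
begin


lemma compact_PiE_UNIV:
  fixes S :: "'a \<Rightarrow> 'b::topological_space set"
  assumes "\<And>i. compact (S i)"
  shows "compact (PiE UNIV S)"
proof -
  have "compactin (product_topology (\<lambda>i. euclidean) UNIV) (PiE UNIV S)"
    using assms by (simp add: compactin_PiE)
  then show ?thesis by (simp add: euclidean_product_topology)
qed

lemma cont_coord2: "continuous_on S (\<lambda>Q::'a\<Rightarrow>'b\<Rightarrow>real. Q a b)"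
proof -
  have "continuous_on UNIV (\<lambda>Q::'a\<Rightarrow>'b\<Rightarrow>real. Q a)" by simp
  then have "continuous_on UNIV (\<lambda>Q::'a\<Rightarrow>'b\<Rightarrow>real. Q a b)"
    by (rule continuous_on_product_then_coordinatewise)
  then show ?thesis using continuous_on_subset by blast
qed

lemma compact_box2:
  assumes "\<And>a b. compact (B a b :: real set)"
  shows "compact {Q::'a\<Rightarrow>'b\<Rightarrow>real. \<forall>a b. Q a b \<in> B a b}"
proof -
  have "{Q::'a\<Rightarrow>'b\<Rightarrow>real. \<forall>a b. Q a b \<in> B a b} = PiE UNIV (\<lambda>a. PiE UNIV (B a))"
    by (auto simp: PiE_iff)
  moreover have "compact (PiE UNIV (\<lambda>a. PiE UNIV (B a)))"
    by (intro compact_PiE_UNIV assms)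
  ultimately show ?thesis by simp
qed



lemma sq_pos_bound: "(max 0 (a + b::real))\<^sup>2 \<le> (max 0 a + b)\<^sup>2"
proof (cases "a \<ge> 0")
  case True
  then show ?thesis by (cases "a + b \<ge> 0") (auto simp: max_def)
next
  case False
  then show ?thesis
    by (cases "a + b \<ge> 0") (auto simp: max_def intro!: power_mono)
qed

lemma alternative:
  fixes X :: "'x::topological_space set" and K :: "'k set" and F :: "'k \<Rightarrow> 'x \<Rightarrow> real"
  assumes cX: "compact X" and neX: "X \<noteq> {}" and fK: "finite K"
    and cont: "\<And>k. k \<in> K \<Longrightarrow> continuous_on X (F k)"
    and mixX: "\<And>t x y. 0 \<le> t \<Longrightarrow> t \<le> 1 \<Longrightarrow> x \<in> X \<Longrightarrow> y \<in> X \<Longrightarrow> mix t x y \<in> X"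
    and mixF: "\<And>t x y k. 0 \<le> t \<Longrightarrow> t \<le> 1 \<Longrightarrow> x \<in> X \<Longrightarrow> y \<in> X \<Longrightarrow> k \<in> K \<Longrightarrow>
                 F k (mix t x y) = (1 - t) * F k x + t * F k y"
  shows "(\<exists>x\<in>X. \<forall>k\<in>K. F k x \<le> 0) \<or>
         (\<exists>l. (\<forall>k\<in>K. 0 \<le> l k) \<and> sum l K = 1 \<and> (\<forall>x\<in>X. 0 < (\<Sum>k\<in>K. l k * F k x)))"
proof -
  define h where "h x = (\<Sum>k\<in>K. (max 0 (F k x))\<^sup>2)" for x
  have ch: "continuous_on X h"
    unfolding h_def by (intro continuous_intros cont)
  obtain x0 where x0: "x0 \<in> X" and min: "\<And>y. y \<in> X \<Longrightarrow> h x0 \<le> h y"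
    using continuous_attains_inf[OF cX neX ch] by blast
  show ?thesis
  proof (cases "\<forall>k\<in>K. F k x0 \<le> 0")
    case True
    then show ?thesis using x0 by blast
  next
    case False
    then obtain k0 where k0: "k0 \<in> K" "F k0 x0 > 0" by force
    define d where "d k = max 0 (F k x0)" for k
    have d0: "d k \<ge> 0" for k by (simp add: d_def)
    have dF: "d k * F k x0 = (d k)\<^sup>2" for k
      by (auto simp: d_def max_def power2_eq_square)
    have hx0: "h x0 = (\<Sum>k\<in>K. (d k)\<^sup>2)" by (simp add: h_def d_def)
    have hpos: "h x0 > 0"
    proof -
      have "(d k0)\<^sup>2 > 0" using k0 by (simp add: d_def)
      moreover have "(d k0)\<^sup>2 \<le> (\<Sum>k\<in>K. (d k)\<^sup>2)"
        using k0 fK by (intro member_le_sum) auto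
      ultimately show ?thesis using hx0 by linarith
    qed
    define D where "D = sum d K"
    have Dpos: "D > 0"
    proof -
      have "d k0 > 0" using k0 by (simp add: d_def)
      moreover have "d k0 \<le> D" unfolding D_def using k0 fK d0 by (intro member_le_sum) auto
      ultimately show ?thesis by linarith
    qed
    have key: "0 < (\<Sum>k\<in>K. d k * F k x)" if xX: "x \<in> X" for x
    proof (rule ccontr)
      assume neg: "\<not> 0 < (\<Sum>k\<in>K. d k * F k x)"
      define \<delta> where "\<delta> k = F k x - F k x0" for k
      define e where "e = - (\<Sum>k\<in>K. d k * \<delta> k)"
      have "(\<Sum>k\<in>K. d k * \<delta> k) = (\<Sum>k\<in>K. d k * F k x) - (\<Sum>k\<in>K. d k * F k x0)"
        by (simp add: \<delta>_def right_diff_distrib sum_subtractf)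
      also have "(\<Sum>k\<in>K. d k * F k x0) = h x0" by (simp add: dF hx0)
      finally have epos: "e > 0" using neg hpos by (simp add: e_def)
      define S2 where "S2 = (\<Sum>k\<in>K. (\<delta> k)\<^sup>2)"
      have S2: "S2 \<ge> 0" unfolding S2_def by (intro sum_nonneg) auto
      define t where "t = min 1 (e / (S2 + 1))"
      have t0: "t > 0" using epos S2 by (simp add: t_def)
      have t1: "t \<le> 1" by (simp add: t_def)
      have "t \<le> e / (S2 + 1)" by (simp add: t_def)
      then have te: "t * (S2 + 1) \<le> e" using S2 by (simp add: le_divide_eq)
      have "h (mix t x0 x) = (\<Sum>k\<in>K. (max 0 (F k x0 + t * \<delta> k))\<^sup>2)"
      proof -
        have "F k (mix t x0 x) = F k x0 + t * \<delta> k" if "k \<in> K" for k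
          using mixF[OF less_imp_le[OF t0] t1 x0 xX that] by (simp add: \<delta>_def algebra_simps)
        then show ?thesis unfolding h_def by (intro sum.cong) auto
      qed
      also have "\<dots> \<le> (\<Sum>k\<in>K. (d k + t * \<delta> k)\<^sup>2)"
        unfolding d_def by (intro sum_mono sq_pos_bound)
      also have "\<dots> = h x0 + 2 * t * (\<Sum>k\<in>K. d k * \<delta> k) + t\<^sup>2 * S2"
      proof -
        have "(\<Sum>k\<in>K. (d k + t * \<delta> k)\<^sup>2) = (\<Sum>k\<in>K. (d k)\<^sup>2 + 2 * t * (d k * \<delta> k) + t\<^sup>2 * (\<delta> k)\<^sup>2)"
          by (intro sum.cong refl) (simp add: power2_eq_square algebra_simps)
        also have "\<dots> = (\<Sum>k\<in>K. (d k)\<^sup>2) + 2 * t * (\<Sum>k\<in>K. d k * \<delta> k) + t\<^sup>2 * S2"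
          by (simp only: sum.distrib sum_distrib_left S2_def)
        finally show ?thesis by (simp only: hx0)
      qed
      also have "\<dots> = h x0 - 2 * t * e + t * (t * S2)"
        by (simp add: e_def power2_eq_square algebra_simps)
      also have "\<dots> < h x0"
      proof -
        have "t * S2 \<le> t * (S2 + 1)" using t0 by (intro mult_left_mono) auto
        then have "t * S2 \<le> e" using te by linarith
        then have a: "t * (t * S2) \<le> t * e" using t0 by (intro mult_left_mono) auto
        have b: "t * e > 0" using t0 epos by simp
        show ?thesis using a b by linarith
      qed
      finally have "h (mix t x0 x) < h x0" .
      moreover have "mix t x0 x \<in> X" using mixX[OF less_imp_le[OF t0] t1 x0 xX] .
      ultimately show False using min by fastforce
    qed
    show ?thesis
    proof (intro disjI2 exI[of _ "\<lambda>k. d k / D"] conjI ballI)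
      show "0 \<le> d k / D" for k using d0 Dpos by simp
      show "(\<Sum>k\<in>K. d k / D) = 1" using Dpos by (simp add: D_def sum_divide_distrib[symmetric])
      fix x assume "x \<in> X"
      have "(\<Sum>k\<in>K. d k / D * F k x) = (\<Sum>k\<in>K. d k * F k x) / D"
        by (simp add: sum_divide_distrib)
      then show "0 < (\<Sum>k\<in>K. d k / D * F k x)" using key[OF \<open>x\<in>X\<close>] Dpos by simp
    qed
  qed
qed



definition cc :: "('s::finite \<Rightarrow> 'y \<Rightarrow> real) \<Rightarrow> ('s \<Rightarrow> 'a \<Rightarrow> real) \<Rightarrow> 'y \<Rightarrow> 'a \<Rightarrow> real" where
  "cc P u y a = (\<Sum>\<theta>\<in>UNIV. P \<theta> y * u \<theta> a)"

definition G :: "'y set \<Rightarrow> ('s::finite \<Rightarrow> 'y \<Rightarrow> real) \<Rightarrow> 'a set \<Rightarrow> ('s \<Rightarrow> 'a \<Rightarrow> real) \<Rightarrow> real" where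
  "G Y P A u = (\<Sum>y\<in>Y. Max (cc P u y ` A))"

lemma payoff_eq: "payoff Y P A u \<sigma> = (\<Sum>y\<in>Y. \<Sum>a\<in>A. \<sigma> y a * cc P u y a)"
proof -
  have "payoff Y P A u \<sigma> = (\<Sum>\<theta>\<in>UNIV. \<Sum>y\<in>Y. \<Sum>a\<in>A. \<sigma> y a * (P \<theta> y * u \<theta> a))"
    unfolding payoff_def mixed_util_def
    by (simp add: sum_distrib_left mult_ac)
  also have "\<dots> = (\<Sum>y\<in>Y. \<Sum>a\<in>A. \<Sum>\<theta>\<in>UNIV. \<sigma> y a * (P \<theta> y * u \<theta> a))"
    by (subst sum.swap) (intro sum.cong refl, rule sum.swap)
  also have "\<dots> = (\<Sum>y\<in>Y. \<Sum>a\<in>A. \<sigma> y a * cc P u y a)"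
    by (simp add: cc_def sum_distrib_left)
  finally show ?thesis .
qed

lemma dist_le_Max:
  fixes c :: "'a \<Rightarrow> real"
  assumes "finite A" "A \<noteq> {}" "is_dist A \<alpha>"
  shows "(\<Sum>a\<in>A. \<alpha> a * c a) \<le> Max (c ` A)"
proof -
  have "(\<Sum>a\<in>A. \<alpha> a * c a) \<le> (\<Sum>a\<in>A. \<alpha> a * Max (c ` A))"
    using assms by (intro sum_mono mult_left_mono) (auto simp: is_dist_def)
  also have "\<dots> = Max (c ` A)" using assms by (simp add: is_dist_def sum_distrib_right[symmetric])
  finally show ?thesis .
qed

lemma payoff_le_G:
  assumes "finite A" "A \<noteq> {}" "\<sigma> \<in> strategies Y A"
  shows "payoff Y P A u \<sigma> \<le> G Y P A u"
  unfolding payoff_eq G_def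
  using assms by (intro sum_mono dist_le_Max) (auto simp: strategies_def)

definition pure :: "('y \<Rightarrow> 'a) \<Rightarrow> 'y \<Rightarrow> 'a \<Rightarrow> real" where
  "pure s y a = (if s y = a then 1 else 0)"

lemma pure_strat: "finite A \<Longrightarrow> (\<And>y. y \<in> Y \<Longrightarrow> s y \<in> A) \<Longrightarrow> pure s \<in> strategies Y A"
  by (auto simp: strategies_def is_dist_def pure_def)

lemma payoff_pure: "finite A \<Longrightarrow> (\<And>y. y \<in> Y \<Longrightarrow> s y \<in> A) \<Longrightarrow>
   payoff Y P A u (pure s) = (\<Sum>y\<in>Y. cc P u y (s y))"
  unfolding payoff_eq
proof (intro sum.cong refl)
  fix y assume "finite A" "\<And>y. y \<in> Y \<Longrightarrow> s y \<in> A" "y \<in> Y"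
  have "(\<Sum>a\<in>A. pure s y a * cc P u y a) = (\<Sum>a\<in>A. if s y = a then cc P u y a else 0)"
    by (intro sum.cong) (auto simp: pure_def)
  also have "\<dots> = cc P u y (s y)" using \<open>finite A\<close> \<open>y \<in> Y\<close> \<open>\<And>y. y \<in> Y \<Longrightarrow> s y \<in> A\<close>
    by (simp add: sum.delta)
  finally show "(\<Sum>a\<in>A. pure s y a * cc P u y a) = cc P u y (s y)" .
qed

lemma best_resp:
  assumes "finite A" "A \<noteq> {}"
  obtains s where "\<And>y. s y \<in> A" "\<And>y. cc P u y (s y) = Max (cc P u y ` A)"
proof -
  have "\<forall>y. \<exists>a\<in>A. cc P u y a = Max (cc P u y ` A)"
  proof
    fix y
    have "Max (cc P u y ` A) \<in> cc P u y ` A" using assms by (intro Max_in) auto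
    then show "\<exists>a\<in>A. cc P u y a = Max (cc P u y ` A)" by force
  qed
  then obtain s where "\<forall>y. s y \<in> A \<and> cc P u y (s y) = Max (cc P u y ` A)" by metis
  then show ?thesis using that by blast
qed

lemma payoff_best: assumes "finite A" "A \<noteq> {}"
  obtains s where "\<And>y. s y \<in> A" "payoff Y P A u (pure s) = G Y P A u"
proof -
  obtain s where s: "\<And>y. s y \<in> A" "\<And>y. cc P u y (s y) = Max (cc P u y ` A)"
    using best_resp[OF assms] by blast
  have "payoff Y P A u (pure s) = G Y P A u"
    using s assms by (simp add: payoff_pure G_def)
  then show ?thesis using that s by blast
qed

lemma value1_eq:
  assumes "finite A" "A \<noteq> {}"
  shows "value1 Y P A u = G Y P A u"
proof -
  obtain s where s: "\<And>y. s y \<in> A" "payoff Y P A u (pure s) = G Y P A u"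
    using payoff_best[OF assms] by blast
  have ps: "pure s \<in> strategies Y A" using s assms by (intro pure_strat) auto
  have bdd: "bdd_above (payoff Y P A u ` strategies Y A)"
    using payoff_le_G[OF assms] by (auto intro!: bdd_aboveI)
  show ?thesis unfolding value1_def
  proof (rule antisym)
    show "(SUP \<sigma>\<in>strategies Y A. payoff Y P A u \<sigma>) \<le> G Y P A u"
      using ps payoff_le_G[OF assms] by (intro cSUP_least) auto
    show "G Y P A u \<le> (SUP \<sigma>\<in>strategies Y A. payoff Y P A u \<sigma>)"
      using s(2) ps bdd by (metis cSUP_upper)
  qed
qed

lemma mixed_util_lower:
  assumes "finite A" "is_dist A \<alpha>"
  shows "mixed_util A u \<theta> \<alpha> \<ge> - (\<Sum>a\<in>A. \<bar>u \<theta> a\<bar>)"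
proof -
  have le1: "\<alpha> a \<le> 1" if "a \<in> A" for a
  proof -
    have "\<alpha> a \<le> sum \<alpha> A" using assms that by (intro member_le_sum) (auto simp: is_dist_def)
    then show ?thesis using assms by (simp add: is_dist_def)
  qed
  have "- (\<Sum>a\<in>A. \<bar>u \<theta> a\<bar>) = (\<Sum>a\<in>A. - \<bar>u \<theta> a\<bar>)" by (simp add: sum_negf)
  also have "\<dots> \<le> (\<Sum>a\<in>A. \<alpha> a * u \<theta> a)"
  proof (intro sum_mono)
    fix a assume a: "a \<in> A"
    have "0 \<le> \<alpha> a" using assms a by (auto simp: is_dist_def)
    have "\<bar>\<alpha> a * u \<theta> a\<bar> \<le> \<bar>u \<theta> a\<bar>"
      using le1[OF a] \<open>0 \<le> \<alpha> a\<close> by (simp add: abs_mult mult_left_le_one_le)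
    then show "- \<bar>u \<theta> a\<bar> \<le> \<alpha> a * u \<theta> a" by linarith
  qed
  finally show ?thesis by (simp add: mixed_util_def)
qed

lemma payoff_lower:
  assumes "finite A" "\<sigma> \<in> strategies Y A" "\<And>\<theta>. is_dist Y (P \<theta>)"
  shows "payoff Y P A u \<sigma> \<ge> - (\<Sum>\<theta>\<in>UNIV. \<Sum>a\<in>A. \<bar>u \<theta> a\<bar>)"
proof -
  have "- (\<Sum>\<theta>\<in>UNIV. \<Sum>a\<in>A. \<bar>u \<theta> a\<bar>) = (\<Sum>\<theta>\<in>UNIV. \<Sum>y\<in>Y. P \<theta> y * (- (\<Sum>a\<in>A. \<bar>u \<theta> a\<bar>)))"
    using assms(3) by (simp add: sum_distrib_right[symmetric] is_dist_def sum_negf)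
  also have "\<dots> \<le> payoff Y P A u \<sigma>"
    unfolding payoff_def using assms
    by (intro sum_mono mult_left_mono mixed_util_lower) (auto simp: is_dist_def strategies_def)
  finally show ?thesis .
qed



lemma G_relabel_actions:
  assumes "bij_betw g A' A"
  shows "G Y P A' (\<lambda>\<theta> n. u \<theta> (g n)) = G Y P A u"
proof -
  have "cc P (\<lambda>\<theta> n. u \<theta> (g n)) y ` A' = cc P u y ` A" for y
  proof -
    have "cc P (\<lambda>\<theta> n. u \<theta> (g n)) y ` A' = cc P u y ` (g ` A')"
      by (auto simp: cc_def)
    then show ?thesis using assms by (simp add: bij_betw_def)
  qed
  then show ?thesis by (simp add: G_def)
qed

lemma G_relabel_signals:
  assumes "bij_betw f W Y"
  shows "G W (\<lambda>\<theta> n. P \<theta> (f n)) A u = G Y P A u"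
proof -
  have "G W (\<lambda>\<theta> n. P \<theta> (f n)) A u = (\<Sum>n\<in>W. Max (cc P u (f n) ` A))"
    unfolding G_def by (simp add: cc_def)
  also have "\<dots> = G Y P A u" unfolding G_def using assms by (rule sum.reindex_bij_betw)
  finally show ?thesis .
qed

lemma MI_general:
  fixes A :: "'a set"
  assumes "more_informative W S Z R" "finite A" "A \<noteq> {}"
  shows "G Z R A u \<le> G W S A u"
proof -
  obtain g where g: "bij_betw g {0..<card A} A" using ex_bij_betw_nat_finite[OF assms(2)] by blast
  have ne: "{0..<card A} \<noteq> {}" using assms by auto
  have "value1 Z R {0..<card A} (\<lambda>\<theta> n. u \<theta> (g n)) \<le> value1 W S {0..<card A} (\<lambda>\<theta> n. u \<theta> (g n))"
    using assms(1) ne unfolding more_informative_def by blast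
  then show ?thesis using ne by (simp add: value1_eq G_relabel_actions[OF g])
qed

lemma is_dist_reindex: "bij_betw f W Y \<Longrightarrow> is_dist Y p \<Longrightarrow> is_dist W (\<lambda>n. p (f n))"
  unfolding is_dist_def by (auto simp: sum.reindex_bij_betw bij_betw_def)

lemma nat_embed:
  fixes Q :: "'s::finite \<Rightarrow> 'y \<Rightarrow> real"
  assumes "is_experiment J Q"
  obtains f where "bij_betw f {0..<card J} J" "is_experiment {0..<card J} (\<lambda>\<theta> n. Q \<theta> (f n))"
proof -
  have fJ: "finite J" using assms by (simp add: is_experiment_def)
  obtain f where f: "bij_betw f {0..<card J} J" using ex_bij_betw_nat_finite[OF fJ] by blast
  have "is_experiment {0..<card J} (\<lambda>\<theta> n. Q \<theta> (f n))"
    using assms f unfolding is_experiment_def by (auto intro: is_dist_reindex)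
  then show ?thesis using that f by blast
qed



lemma coupling_dominates:
  fixes Q :: "'s::finite \<Rightarrow> (nat \<Rightarrow> 'y) \<Rightarrow> real"
  assumes Q: "Q \<in> couplings m Y P" and j: "j < m" and fA: "finite A" and neA: "A \<noteq> {}"
    and fY: "\<forall>j<m. finite (Y j)"
  shows "G (Y j) (P j) A u \<le> G (PiE {..<m} Y) Q A u"
proof -
  define J where "J = PiE {..<m} Y"
  have fJ: "finite J" unfolding J_def using fY by (intro finite_PiE) auto
  obtain s where s: "\<And>y. s y \<in> A" "\<And>y. cc (P j) u y (s y) = Max (cc (P j) u y ` A)"
    using best_resp[OF fA neA] by blast
  have marg: "\<And>\<theta> y. y \<in> Y j \<Longrightarrow> (\<Sum>ys\<in>{ys\<in>J. ys j = y}. Q \<theta> ys) = P j \<theta> y"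
    using Q j unfolding couplings_def J_def by blast
  have ccm: "cc (P j) u y a = (\<Sum>ys\<in>{ys\<in>J. ys j = y}. cc Q u ys a)" if "y \<in> Y j" for y a
  proof -
    have "cc (P j) u y a = (\<Sum>\<theta>\<in>UNIV. (\<Sum>ys\<in>{ys\<in>J. ys j = y}. Q \<theta> ys) * u \<theta> a)"
      unfolding cc_def using marg[OF that] by simp
    also have "\<dots> = (\<Sum>ys\<in>{ys\<in>J. ys j = y}. cc Q u ys a)"
      unfolding cc_def by (simp add: sum_distrib_right) (rule sum.swap)
    finally show ?thesis .
  qed
  have "G (Y j) (P j) A u = (\<Sum>y\<in>Y j. cc (P j) u y (s y))"
    unfolding G_def using s by simp
  also have "\<dots> = (\<Sum>y\<in>Y j. \<Sum>ys\<in>{ys. ys \<in> J \<and> ys j = y}. cc Q u ys (s (ys j)))"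
    by (intro sum.cong refl) (simp add: ccm)
  also have "\<dots> = (\<Sum>ys\<in>J. cc Q u ys (s (ys j)))"
  proof (rule sum.group[OF fJ])
    show "finite (Y j)" using fY j by blast
    show "(\<lambda>ys. ys j) ` J \<subseteq> Y j" using j by (auto simp: J_def PiE_iff)
  qed
  also have "\<dots> \<le> (\<Sum>ys\<in>J. Max (cc Q u ys ` A))"
    using fA s by (intro sum_mono Max_ge) auto
  also have "\<dots> = G (PiE {..<m} Y) Q A u" by (simp add: G_def J_def)
  finally show ?thesis .
qed

lemma coupling_experiment:
  assumes "Q \<in> couplings m Y P" "\<forall>j<m. finite (Y j)"
  shows "is_experiment (PiE {..<m} Y) Q"
  using assms unfolding couplings_def is_experiment_def
  by (auto intro: finite_PiE)

lemma coupling_ge_R: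
  fixes Q :: "'s::finite \<Rightarrow> (nat \<Rightarrow> 'y) \<Rightarrow> real" and A :: "'a set"
  assumes Q: "Q \<in> couplings m Y P" and sup: "blackwell_sup m Y P Z R"
    and fA: "finite A" and neA: "A \<noteq> {}" and fY: "\<forall>j<m. finite (Y j)"
  shows "G Z R A u \<le> G (PiE {..<m} Y) Q A u"
proof -
  define J where "J = PiE {..<m} Y"
  have "is_experiment J Q" unfolding J_def using coupling_experiment[OF Q fY] .
  then obtain f where f: "bij_betw f {0..<card J} J"
    and ex: "is_experiment {0..<card J} (\<lambda>\<theta> n. Q \<theta> (f n))"
    using nat_embed by blast
  have mi: "more_informative {0..<card J} (\<lambda>\<theta> n. Q \<theta> (f n)) (Y j) (P j)" if "j < m" for j
    unfolding more_informative_def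
  proof (intro allI impI)
    fix A' :: "nat set" and u' assume A': "finite A' \<and> A' \<noteq> {}"
    have "G (Y j) (P j) A' u' \<le> G J Q A' u'"
      unfolding J_def using coupling_dominates[OF Q that _ _ fY] A' by blast
    then show "value1 (Y j) (P j) A' u' \<le> value1 {0..<card J} (\<lambda>\<theta> n. Q \<theta> (f n)) A' u'"
      using A' by (simp add: value1_eq G_relabel_signals[OF f])
  qed
  have "more_informative {0..<card J} (\<lambda>\<theta> n. Q \<theta> (f n)) Z R"
    using sup ex mi unfolding blackwell_sup_def by blast
  then have "G Z R A u \<le> G {0..<card J} (\<lambda>\<theta> n. Q \<theta> (f n)) A u"
    using MI_general fA neA by blast
  then show ?thesis using G_relabel_signals[OF f, of Q A u] by (simp add: J_def)
qed



lemmas cont_coord2' [continuous_intros] = cont_coord2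

lemma closed_sum_eq:
  "closed {K::'a\<Rightarrow>'b\<Rightarrow>real. (\<Sum>y\<in>T. c y * K z y) = r}"
  by (intro closed_Collect_eq continuous_intros)

lemma blackwell_garbling:
  fixes P :: "'s::finite \<Rightarrow> 'y \<Rightarrow> real" and R :: "'s \<Rightarrow> 'z \<Rightarrow> real"
  assumes exP: "is_experiment Y P" and exR: "is_experiment Z R" and mi: "more_informative Z R Y P"
  shows "\<exists>K. (\<forall>z\<in>Z. is_dist Y (K z)) \<and> (\<forall>\<theta>. \<forall>y\<in>Y. (\<Sum>z\<in>Z. R \<theta> z * K z y) = P \<theta> y)"
proof -
  have fY: "finite Y" and fZ: "finite Z" using exP exR by (auto simp: is_experiment_def)
  have P0: "\<And>\<theta> y. y \<in> Y \<Longrightarrow> 0 \<le> P \<theta> y" and P1: "\<And>\<theta>. sum (P \<theta>) Y = 1"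
    using exP by (auto simp: is_experiment_def is_dist_def)
  have R0: "\<And>\<theta> z. z \<in> Z \<Longrightarrow> 0 \<le> R \<theta> z" and R1: "\<And>\<theta>. sum (R \<theta>) Z = 1"
    using exR by (auto simp: is_experiment_def is_dist_def)
  have neY: "Y \<noteq> {}" using P1 by auto
  define B where "B z y = (if z \<in> Z \<and> y \<in> Y then {0..1::real} else {0})" for z y
  define X where "X = {K::'z\<Rightarrow>'y\<Rightarrow>real. (\<forall>z y. K z y \<in> B z y) \<and> (\<forall>z\<in>Z. (\<Sum>y\<in>Y. 1 * K z y) = 1)}"
  have X_eq: "X = {K. \<forall>z y. K z y \<in> B z y} \<inter> (\<Inter>z\<in>Z. {K. (\<Sum>y\<in>Y. 1 * K z y) = 1})"
    unfolding X_def by auto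
  have X0: "0 \<le> K z y" if "K \<in> X" "z \<in> Z" "y \<in> Y" for K z y
  proof -
    have "K z y \<in> B z y" using that(1) unfolding X_def by blast
    then show ?thesis using that by (simp add: B_def)
  qed
  have cX: "compact X" unfolding X_eq
    by (intro compact_Int_closed compact_box2 closed_INT ballI closed_sum_eq) (auto simp: B_def)
  obtain y0 where y0: "y0 \<in> Y" using neY by blast
  define K0 where "K0 z y = (if z \<in> Z \<and> y = y0 then 1 else 0::real)" for z y
  have "K0 \<in> X" unfolding X_def K0_def B_def using y0 fY by (auto simp: sum.delta)
  then have neX: "X \<noteq> {}" by blast
  define F where "F p K = P (fst p) (snd p) - (\<Sum>z\<in>Z. R (fst p) z * K z (snd p))"
    for p :: "'s \<times> 'y" and K :: "'z\<Rightarrow>'y\<Rightarrow>real"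
  define mix where "mix t K1 K2 = (\<lambda>z y. (1 - t) * K1 z y + t * K2 z y)"
    for t :: real and K1 K2 :: "'z\<Rightarrow>'y\<Rightarrow>real"
  have alt: "(\<exists>K\<in>X. \<forall>p\<in>UNIV \<times> Y. F p K \<le> 0) \<or>
         (\<exists>l. (\<forall>p\<in>UNIV \<times> Y. 0 \<le> l p) \<and> sum l (UNIV \<times> Y) = 1 \<and> (\<forall>K\<in>X. 0 < (\<Sum>p\<in>UNIV \<times> Y. l p * F p K)))"
  proof (rule alternative[where mix = mix, OF cX neX])
    show "finite (UNIV \<times> Y :: ('s \<times> 'y) set)" using fY by simp
    show "continuous_on X (F p)" for p unfolding F_def by (intro continuous_intros)
    fix t :: real and K1 K2 assume t: "0 \<le> t" "t \<le> 1" and K: "K1 \<in> X" "K2 \<in> X"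
    show "mix t K1 K2 \<in> X"
      unfolding X_def
    proof (intro CollectI conjI allI ballI)
      fix z y
      show "mix t K1 K2 z y \<in> B z y"
      proof (cases "z \<in> Z \<and> y \<in> Y")
        case True
        have "K1 z y \<in> B z y" "K2 z y \<in> B z y" using K unfolding X_def by blast+
        then have "K1 z y \<in> {0..1}" "K2 z y \<in> {0..1}" using True by (auto simp: B_def)
        then show ?thesis using True t unfolding mix_def B_def
          by (auto intro!: convex_bound_le add_nonneg_nonneg mult_nonneg_nonneg)
      next
        case False
        have "K1 z y \<in> B z y" "K2 z y \<in> B z y" using K unfolding X_def by blast+
        then have "K1 z y = 0" "K2 z y = 0" using False by (auto simp: B_def)
        then show ?thesis using False by (simp add: B_def mix_def)
      qed
    next
      fix z assume z: "z \<in> Z"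
      have "(\<Sum>y\<in>Y. 1 * mix t K1 K2 z y) = (1 - t) * (\<Sum>y\<in>Y. 1 * K1 z y) + t * (\<Sum>y\<in>Y. 1 * K2 z y)"
        by (simp add: mix_def sum.distrib sum_distrib_left)
      then show "(\<Sum>y\<in>Y. 1 * mix t K1 K2 z y) = 1" using K z by (simp add: X_def)
    qed
    fix p
    show "F p (mix t K1 K2) = (1 - t) * F p K1 + t * F p K2"
    proof -
      have "(\<Sum>z\<in>Z. R (fst p) z * mix t K1 K2 z (snd p)) =
            (\<Sum>z\<in>Z. (1 - t) * (R (fst p) z * K1 z (snd p)) + t * (R (fst p) z * K2 z (snd p)))"
        by (intro sum.cong refl) (simp add: mix_def algebra_simps)
      also have "\<dots> = (1 - t) * (\<Sum>z\<in>Z. R (fst p) z * K1 z (snd p)) + t * (\<Sum>z\<in>Z. R (fst p) z * K2 z (snd p))"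
        by (simp add: sum.distrib sum_distrib_left)
      finally have eq: "(\<Sum>z\<in>Z. R (fst p) z * mix t K1 K2 z (snd p)) = (1 - t) * (\<Sum>z\<in>Z. R (fst p) z * K1 z (snd p)) + t * (\<Sum>z\<in>Z. R (fst p) z * K2 z (snd p))" .
      show ?thesis unfolding F_def eq by (simp add: algebra_simps)
    qed
  qed
  show ?thesis
  proof (cases "\<exists>K\<in>X. \<forall>p\<in>UNIV \<times> Y. F p K \<le> 0")
    case True
    then obtain K where K: "K \<in> X" and le: "\<And>\<theta> y. y \<in> Y \<Longrightarrow> P \<theta> y \<le> (\<Sum>z\<in>Z. R \<theta> z * K z y)"
      unfolding F_def by fastforce
    have Kd: "\<forall>z\<in>Z. is_dist Y (K z)" using K X0[OF K] by (auto simp: X_def is_dist_def)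
    have eq: "(\<Sum>z\<in>Z. R \<theta> z * K z y) = P \<theta> y" if y: "y \<in> Y" for \<theta> y
    proof -
      have "(\<Sum>y\<in>Y. (\<Sum>z\<in>Z. R \<theta> z * K z y) - P \<theta> y) = (\<Sum>z\<in>Z. R \<theta> z * (\<Sum>y\<in>Y. K z y)) - 1"
        by (simp add: sum_subtractf P1 sum_distrib_left) (rule sum.swap)
      also have "\<dots> = 0" using Kd R1 by (simp add: is_dist_def)
      finally have "(\<Sum>y\<in>Y. (\<Sum>z\<in>Z. R \<theta> z * K z y) - P \<theta> y) = 0" .
      then have "\<forall>y\<in>Y. (\<Sum>z\<in>Z. R \<theta> z * K z y) - P \<theta> y = 0"
        using sum_nonneg_eq_0_iff[OF fY] le by (simp add: sum_nonneg_eq_0_iff[OF fY])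
      then show ?thesis using y by simp
    qed
    show ?thesis using Kd eq by blast
  next
    case False
    then obtain l where l0: "\<forall>p\<in>UNIV \<times> Y. 0 \<le> l p"
      and lpos: "\<forall>K\<in>X. 0 < (\<Sum>p\<in>UNIV \<times> Y. l p * F p K)" using alt by blast
    define u where "u \<theta> y = l (\<theta>, y)" for \<theta> y
    obtain s where s: "\<And>z. s z \<in> Y" "\<And>z. cc R u z (s z) = Max (cc R u z ` Y)"
      using best_resp[OF fY neY] by blast
    define K1 where "K1 z y = (if z \<in> Z \<and> y = s z then 1 else 0::real)" for z y
    have K1X: "K1 \<in> X" unfolding X_def K1_def B_def using s fY by (auto simp: sum.delta)
    have split: "(\<Sum>p\<in>UNIV \<times> Y. l p * F p K1) =
        (\<Sum>\<theta>\<in>UNIV. \<Sum>y\<in>Y. u \<theta> y * P \<theta> y) - (\<Sum>\<theta>\<in>UNIV. \<Sum>y\<in>Y. u \<theta> y * (\<Sum>z\<in>Z. R \<theta> z * K1 z y))"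
      by (simp add: sum.cartesian_product F_def u_def right_diff_distrib sum_subtractf split_def)
    have t1: "(\<Sum>\<theta>\<in>UNIV. \<Sum>y\<in>Y. u \<theta> y * P \<theta> y) = (\<Sum>y\<in>Y. cc P u y y)"
      unfolding cc_def by (subst sum.swap) (simp add: mult.commute)
    also have "\<dots> \<le> G Y P Y u"
      unfolding G_def using fY by (intro sum_mono Max_ge) auto
    finally have t1': "(\<Sum>\<theta>\<in>UNIV. \<Sum>y\<in>Y. u \<theta> y * P \<theta> y) \<le> G Y P Y u" .
    have inner: "(\<Sum>y\<in>Y. u \<theta> y * (\<Sum>z\<in>Z. R \<theta> z * K1 z y)) = (\<Sum>z\<in>Z. R \<theta> z * u \<theta> (s z))" for \<theta>
    proof -
      have "(\<Sum>y\<in>Y. u \<theta> y * (\<Sum>z\<in>Z. R \<theta> z * K1 z y)) = (\<Sum>z\<in>Z. \<Sum>y\<in>Y. R \<theta> z * (u \<theta> y * K1 z y))"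
        by (simp add: sum_distrib_left mult_ac) (rule sum.swap)
      also have "\<dots> = (\<Sum>z\<in>Z. R \<theta> z * u \<theta> (s z))"
      proof (intro sum.cong refl)
        fix z assume z: "z \<in> Z"
        have "(\<Sum>y\<in>Y. R \<theta> z * (u \<theta> y * K1 z y)) = (\<Sum>y\<in>Y. if y = s z then R \<theta> z * u \<theta> y else 0)"
          by (intro sum.cong) (auto simp: K1_def z)
        also have "\<dots> = R \<theta> z * u \<theta> (s z)" using fY s(1)[of z] by (simp add: sum.delta')
        finally show "(\<Sum>y\<in>Y. R \<theta> z * (u \<theta> y * K1 z y)) = R \<theta> z * u \<theta> (s z)" .
      qed
      finally show ?thesis .
    qed
    have t2: "(\<Sum>\<theta>\<in>UNIV. \<Sum>y\<in>Y. u \<theta> y * (\<Sum>z\<in>Z. R \<theta> z * K1 z y)) = G Z R Y u"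
    proof -
      have "(\<Sum>\<theta>\<in>UNIV. \<Sum>y\<in>Y. u \<theta> y * (\<Sum>z\<in>Z. R \<theta> z * K1 z y)) = (\<Sum>\<theta>\<in>UNIV. \<Sum>z\<in>Z. R \<theta> z * u \<theta> (s z))"
        by (simp add: inner)
      also have "\<dots> = (\<Sum>z\<in>Z. cc R u z (s z))" unfolding cc_def by (rule sum.swap)
      also have "\<dots> = G Z R Y u" unfolding G_def using s by simp
      finally show ?thesis .
    qed
    have "G Y P Y u \<le> G Z R Y u" using MI_general[OF mi fY neY] .
    then have "(\<Sum>p\<in>UNIV \<times> Y. l p * F p K1) \<le> 0" using split t1' t2 by linarith
    then show ?thesis using lpos K1X by fastforce
  qed
qed



lemma PiE_sum_prod:
  fixes f :: "nat \<Rightarrow> 'y \<Rightarrow> real"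
  assumes "\<And>j. j < m \<Longrightarrow> finite (Y' j)"
  shows "(\<Sum>ys\<in>PiE {..<m} Y'. \<Prod>j<m. f j (ys j)) = (\<Prod>j<m. \<Sum>y\<in>Y' j. f j y)"
  using prod_sum_PiE[of "{..<m}" Y' f] assms by simp

lemma PiE_fiber:
  assumes "j < m"
  shows "{ys\<in>PiE {..<m} Y. ys j = y} = PiE {..<m} (Y(j := {y})) \<or> y \<notin> Y j"
proof (cases "y \<in> Y j")
  case True
  have "{ys\<in>PiE {..<m} Y. ys j = y} = PiE {..<m} (Y(j := {y}))"
  proof (rule set_eqI)
    fix ys
    show "ys \<in> {ys\<in>PiE {..<m} Y. ys j = y} \<longleftrightarrow> ys \<in> PiE {..<m} (Y(j := {y}))"
    proof
      assume "ys \<in> {ys\<in>PiE {..<m} Y. ys j = y}"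
      then have h: "\<forall>i\<in>{..<m}. ys i \<in> Y i" "ys \<in> extensional {..<m}" "ys j = y"
        by (simp_all add: PiE_iff)
      have "\<forall>i\<in>{..<m}. ys i \<in> (Y(j := {y})) i" using h(1,3) by auto
      then show "ys \<in> PiE {..<m} (Y(j := {y}))" using h(2) by (simp add: PiE_iff)
    next
      assume "ys \<in> PiE {..<m} (Y(j := {y}))"
      then have h: "\<forall>i\<in>{..<m}. ys i \<in> (Y(j := {y})) i" "ys \<in> extensional {..<m}"
        by (simp_all add: PiE_iff)
      have "\<forall>i\<in>{..<m}. ys i \<in> Y i" using h(1) True
        by (metis fun_upd_apply singletonD)
      moreover have "ys j \<in> (Y(j := {y})) j" using h(1) assms by blast
      then have "ys j = y" by simp
      ultimately show "ys \<in> {ys\<in>PiE {..<m} Y. ys j = y}" using h(2) by (simp add: PiE_iff)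
    qed
  qed
  then show ?thesis by blast
qed simp

locale qstar =
  fixes m :: nat and Y :: "nat \<Rightarrow> 'y set" and P :: "nat \<Rightarrow> 's::finite \<Rightarrow> 'y \<Rightarrow> real"
    and Z :: "'z set" and R :: "'s \<Rightarrow> 'z \<Rightarrow> real" and KK :: "nat \<Rightarrow> 'z \<Rightarrow> 'y \<Rightarrow> real"
  assumes exP: "\<forall>j<m. is_experiment (Y j) (P j)" and exR: "is_experiment Z R"
    and KKd: "\<forall>j<m. \<forall>z\<in>Z. is_dist (Y j) (KK j z)"
    and KKm: "\<forall>j<m. \<forall>\<theta>. \<forall>y\<in>Y j. (\<Sum>z\<in>Z. R \<theta> z * KK j z y) = P j \<theta> y"
begin

definition w :: "'z \<Rightarrow> (nat \<Rightarrow> 'y) \<Rightarrow> real" where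
  "w z ys = (\<Prod>j<m. KK j z (ys j))"

definition Qs :: "'s \<Rightarrow> (nat \<Rightarrow> 'y) \<Rightarrow> real" where
  "Qs \<theta> ys = (\<Sum>z\<in>Z. R \<theta> z * w z ys)"

abbreviation "J \<equiv> PiE {..<m} Y"

lemma fY: "j < m \<Longrightarrow> finite (Y j)" using exP by (simp add: is_experiment_def)
lemma fZ: "finite Z" using exR by (simp add: is_experiment_def)
lemma fJ: "finite J" using fY by (intro finite_PiE) auto
lemma R0: "z \<in> Z \<Longrightarrow> 0 \<le> R \<theta> z" using exR by (auto simp: is_experiment_def is_dist_def)
lemma R1: "sum (R \<theta>) Z = 1" using exR by (auto simp: is_experiment_def is_dist_def)

lemma w0: "z \<in> Z \<Longrightarrow> ys \<in> J \<Longrightarrow> 0 \<le> w z ys"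
  unfolding w_def using KKd by (intro prod_nonneg) (auto simp: is_dist_def PiE_iff)

lemma w1: "z \<in> Z \<Longrightarrow> (\<Sum>ys\<in>J. w z ys) = 1"
  unfolding w_def using KKd fY by (subst PiE_sum_prod) (auto simp: is_dist_def)

lemma w_fiber: assumes "z \<in> Z" "j < m" "y \<in> Y j"
  shows "(\<Sum>ys\<in>{ys\<in>J. ys j = y}. w z ys) = KK j z y"
proof -
  have eq: "{ys\<in>J. ys j = y} = PiE {..<m} (Y(j := {y}))"
    using PiE_fiber[OF assms(2), of Y y] assms(3) by blast
  have "(\<Sum>ys\<in>{ys\<in>J. ys j = y}. w z ys) = (\<Prod>i<m. \<Sum>y'\<in>(Y(j := {y})) i. KK i z y')"
    unfolding eq w_def using fY by (subst PiE_sum_prod) auto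
  also have "\<dots> = (\<Prod>i<m. if i = j then KK j z y else 1)"
    using KKd assms(1) by (intro prod.cong refl) (auto simp: is_dist_def)
  also have "\<dots> = KK j z y" using assms(2) by (simp add: prod.delta)
  finally show ?thesis .
qed

lemma Qs_coupling: "Qs \<in> couplings m Y P"
  unfolding couplings_def
proof (intro CollectI conjI allI impI ballI)
  fix \<theta>
  show "is_dist J (Qs \<theta>)"
    unfolding is_dist_def
  proof
    show "\<forall>ys\<in>J. 0 \<le> Qs \<theta> ys"
      unfolding Qs_def using R0 w0 by (auto intro!: sum_nonneg mult_nonneg_nonneg)
    have "sum (Qs \<theta>) J = (\<Sum>z\<in>Z. R \<theta> z * (\<Sum>ys\<in>J. w z ys))"
      unfolding Qs_def by (simp add: sum_distrib_left) (rule sum.swap)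
    also have "\<dots> = 1" using w1 R1 by simp
    finally show "sum (Qs \<theta>) J = 1" .
  qed
next
  fix \<theta> j y assume j: "j < m" and y: "y \<in> Y j"
  have "(\<Sum>ys\<in>{ys\<in>J. ys j = y}. Qs \<theta> ys) = (\<Sum>z\<in>Z. R \<theta> z * (\<Sum>ys\<in>{ys\<in>J. ys j = y}. w z ys))"
    unfolding Qs_def by (simp add: sum_distrib_left) (rule sum.swap)
  also have "\<dots> = (\<Sum>z\<in>Z. R \<theta> z * KK j z y)" using w_fiber j y by simp
  also have "\<dots> = P j \<theta> y" using KKm j y by simp
  finally show "(\<Sum>ys\<in>{ys\<in>J. ys j = y}. Qs \<theta> ys) = P j \<theta> y" .
qed

lemma Qs_upper:
  assumes fA: "finite A" and neA: "A \<noteq> {}" and \<sigma>: "\<sigma> \<in> strategies J A"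
  shows "payoff J Qs A u \<sigma> \<le> G Z R A u"
proof -
  define \<tau> where "\<tau> z a = (\<Sum>ys\<in>J. w z ys * \<sigma> ys a)" for z a
  have \<tau>S: "\<tau> \<in> strategies Z A"
    unfolding strategies_def
  proof (intro CollectI ballI)
    fix z assume z: "z \<in> Z"
    show "is_dist A (\<tau> z)" unfolding is_dist_def
    proof
      show "\<forall>a\<in>A. 0 \<le> \<tau> z a" unfolding \<tau>_def using \<sigma> w0[OF z]
        by (auto intro!: sum_nonneg mult_nonneg_nonneg simp: strategies_def is_dist_def)
      have "sum (\<tau> z) A = (\<Sum>ys\<in>J. w z ys * sum (\<sigma> ys) A)"
        unfolding \<tau>_def by (simp add: sum_distrib_left) (rule sum.swap)
      also have "\<dots> = (\<Sum>ys\<in>J. w z ys)" using \<sigma> by (simp add: strategies_def is_dist_def)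
      also have "\<dots> = 1" using w1[OF z] .
      finally show "sum (\<tau> z) A = 1" .
    qed
  qed
  have mu: "mixed_util A u \<theta> (\<tau> z) = (\<Sum>ys\<in>J. w z ys * mixed_util A u \<theta> (\<sigma> ys))" for \<theta> z
    unfolding mixed_util_def \<tau>_def
    by (simp add: sum_distrib_left sum_distrib_right mult_ac) (rule sum.swap)
  have "payoff J Qs A u \<sigma> = (\<Sum>\<theta>\<in>UNIV. \<Sum>z\<in>Z. R \<theta> z * (\<Sum>ys\<in>J. w z ys * mixed_util A u \<theta> (\<sigma> ys)))"
    unfolding payoff_def Qs_def
    by (intro sum.cong refl) (simp add: sum_distrib_left sum_distrib_right mult_ac, rule sum.swap)
  also have "\<dots> = payoff Z R A u \<tau>"
    unfolding payoff_def by (simp add: mu)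
  also have "\<dots> \<le> G Z R A u" using payoff_le_G[OF fA neA \<tau>S] .
  finally show ?thesis .
qed

end



lemma l_lin: "(\<Sum>x\<in>S. ((1 - t) * a x + t * b x) * c x) = (1 - t) * (\<Sum>x\<in>S. a x * c x) + t * (\<Sum>x\<in>S. b x * c x)"
  for a b c :: "'b \<Rightarrow> real"
  by (simp add: distrib_right sum.distrib sum_distrib_left mult.assoc)
lemma l2_lin: "(\<Sum>x\<in>S. (1 - t) * a x + t * b x) = (1 - t) * (\<Sum>x\<in>S. a x) + t * (\<Sum>x\<in>S. b x)"
  for a b :: "'b \<Rightarrow> real"
  by (simp add: sum.distrib sum_distrib_left)

lemma payoff_lin_Q:
  "payoff Y (\<lambda>\<theta> ys. (1 - t) * Q1 \<theta> ys + t * Q2 \<theta> ys) A u \<sigma> = (1 - t) * payoff Y Q1 A u \<sigma> + t * payoff Y Q2 A u \<sigma>"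
proof -
  have "payoff Y (\<lambda>\<theta> ys. (1 - t) * Q1 \<theta> ys + t * Q2 \<theta> ys) A u \<sigma> =
     (\<Sum>\<theta>\<in>UNIV. (1 - t) * (\<Sum>y\<in>Y. Q1 \<theta> y * mixed_util A u \<theta> (\<sigma> y)) + t * (\<Sum>y\<in>Y. Q2 \<theta> y * mixed_util A u \<theta> (\<sigma> y)))"
    unfolding payoff_def by (intro sum.cong refl l_lin)
  also have "\<dots> = (1 - t) * payoff Y Q1 A u \<sigma> + t * payoff Y Q2 A u \<sigma>"
    unfolding payoff_def by (rule l2_lin)
  finally show ?thesis .
qed

lemma payoff_cong_Q:
  "(\<And>\<theta> ys. ys \<in> Y \<Longrightarrow> Q1 \<theta> ys = Q2 \<theta> ys) \<Longrightarrow> payoff Y Q1 A u \<sigma> = payoff Y Q2 A u \<sigma>"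
  unfolding payoff_def by simp

context qstar begin

lemma strat_ne: assumes "A \<noteq> {}" "finite A" shows "strategies J A \<noteq> {}"
proof -
  obtain a where "a \<in> A" using assms by blast
  then have "pure (\<lambda>_. a) \<in> strategies J A" using assms by (intro pure_strat) auto
  then show ?thesis by blast
qed

lemma coupling_lower:
  assumes "Q \<in> couplings m Y P" "finite A" "\<sigma> \<in> strategies J A"
  shows "payoff J Q A u \<sigma> \<ge> - (\<Sum>\<theta>\<in>UNIV. \<Sum>a\<in>A. \<bar>u \<theta> a\<bar>)"
  using assms by (intro payoff_lower) (auto simp: couplings_def)

lemma INF_le:
  assumes "Q0 \<in> couplings m Y P" "finite A" "\<sigma> \<in> strategies J A"
  shows "(INF Q\<in>couplings m Y P. payoff J Q A u \<sigma>) \<le> payoff J Q0 A u \<sigma>"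
proof (rule cINF_lower[OF _ assms(1)])
  show "bdd_below ((\<lambda>Q. payoff J Q A u \<sigma>) ` couplings m Y P)"
    using coupling_lower[OF _ assms(2,3)] by (intro bdd_belowI) auto
qed

lemma upper:
  assumes fA: "finite A" and neA: "A \<noteq> {}"
  shows "valueM m Y P A u \<le> G Z R A u"
  unfolding valueM_def
proof (rule cSUP_least)
  show "strategies J A \<noteq> {}" using strat_ne[OF neA fA] .
  fix \<sigma> assume \<sigma>: "\<sigma> \<in> strategies J A"
  have "(INF Q\<in>couplings m Y P. payoff J Q A u \<sigma>) \<le> payoff J Qs A u \<sigma>"
    using INF_le[OF Qs_coupling fA \<sigma>] .
  also have "\<dots> \<le> G Z R A u" using Qs_upper[OF fA neA \<sigma>] .
  finally show "(INF Q\<in>couplings m Y P. payoff J Q A u \<sigma>) \<le> G Z R A u" .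
qed

end



lemma payoff_mix_sigma:
  "payoff Y P A u (\<lambda>y a. \<Sum>s\<in>S. l s * \<sigma>s s y a) = (\<Sum>s\<in>S. l s * payoff Y P A u (\<sigma>s s))"
proof -
  have "payoff Y P A u (\<lambda>y a. \<Sum>s\<in>S. l s * \<sigma>s s y a) =
        (\<Sum>y\<in>Y. \<Sum>a\<in>A. \<Sum>s\<in>S. l s * (\<sigma>s s y a * cc P u y a))"
    unfolding payoff_eq by (simp add: sum_distrib_right mult.assoc)
  also have "\<dots> = (\<Sum>y\<in>Y. \<Sum>s\<in>S. \<Sum>a\<in>A. l s * (\<sigma>s s y a * cc P u y a))"
    by (intro sum.cong refl) (rule sum.swap)
  also have "\<dots> = (\<Sum>s\<in>S. \<Sum>y\<in>Y. \<Sum>a\<in>A. l s * (\<sigma>s s y a * cc P u y a))"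
    by (rule sum.swap)
  also have "\<dots> = (\<Sum>s\<in>S. l s * payoff Y P A u (\<sigma>s s))"
    unfolding payoff_eq by (simp add: sum_distrib_left)
  finally show ?thesis .
qed

lemma payoff_cong_sigma:
  "(\<And>y. y \<in> Y \<Longrightarrow> \<sigma>1 y = \<sigma>2 y) \<Longrightarrow> payoff Y P A u \<sigma>1 = payoff Y P A u \<sigma>2"
  unfolding payoff_def by simp

lemma conv01: "a \<in> {0..1} \<Longrightarrow> b \<in> {0..1} \<Longrightarrow> 0 \<le> t \<Longrightarrow> t \<le> 1 \<Longrightarrow> (1 - t) * a + t * (b::real) \<in> {0..1}"
  by (auto intro!: convex_bound_le add_nonneg_nonneg mult_nonneg_nonneg)

lemma sum_mix1: "(\<Sum>x\<in>S. 1 * ((1 - t) * a x + t * b x)) = (1 - t) * (\<Sum>x\<in>S. 1 * a x) + t * (\<Sum>x\<in>S. 1 * (b x::real))"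
  by (simp add: sum.distrib sum_distrib_left)

context qstar begin

lemma lower:
  assumes fA: "finite A" and neA: "A \<noteq> {}" and sup: "blackwell_sup m Y P Z R" and eps: "\<epsilon> > 0"
  shows "G Z R A u - \<epsilon> \<le> valueM m Y P A u"
proof -
  define L where "L = G Z R A u"
  have fYa: "\<forall>j<m. finite (Y j)" using fY by blast
  define B where "B ys = (if ys \<in> J then {0..1::real} else {0})" for ys
  define X where "X = {Q::'s\<Rightarrow>(nat\<Rightarrow>'y)\<Rightarrow>real. (\<forall>\<theta> ys. Q \<theta> ys \<in> B ys) \<and>
      (\<forall>\<theta>. (\<Sum>ys\<in>J. 1 * Q \<theta> ys) = 1) \<and>
      (\<forall>\<theta>. \<forall>j\<in>{..<m}. \<forall>y\<in>Y j. (\<Sum>ys\<in>{ys\<in>J. ys j = y}. 1 * Q \<theta> ys) = P j \<theta> y)}"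
  have X_eq: "X = {Q. \<forall>\<theta> ys. Q \<theta> ys \<in> B ys} \<inter> (\<Inter>\<theta>\<in>UNIV. {Q. (\<Sum>ys\<in>J. 1 * Q \<theta> ys) = 1}) \<inter>
     (\<Inter>\<theta>\<in>UNIV. \<Inter>j\<in>{..<m}. \<Inter>y\<in>Y j. {Q. (\<Sum>ys\<in>{ys\<in>J. ys j = y}. 1 * Q \<theta> ys) = P j \<theta> y})"
    unfolding X_def by auto
  have cX: "compact X" unfolding X_eq
    by (intro compact_Int_closed compact_box2 closed_Int closed_INT ballI closed_sum_eq)
       (auto simp: B_def)
  have XB: "Q \<theta> ys \<in> B ys" if "Q \<in> X" for Q \<theta> ys using that unfolding X_def by blast
  have XC: "Q \<in> couplings m Y P" if Q: "Q \<in> X" for Q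
    unfolding couplings_def
  proof (intro CollectI conjI allI impI ballI)
    fix \<theta>
    show "is_dist J (Q \<theta>)" unfolding is_dist_def
    proof
      show "\<forall>ys\<in>J. 0 \<le> Q \<theta> ys"
      proof
        fix ys assume ys: "ys \<in> J"
        have "Q \<theta> ys \<in> B ys" using XB[OF Q] .
        then show "0 \<le> Q \<theta> ys" using ys by (simp add: B_def)
      qed
      show "sum (Q \<theta>) J = 1" using Q by (simp add: X_def)
    qed
  next
    fix \<theta> j y assume "j < m" "y \<in> Y j"
    then show "(\<Sum>ys\<in>{ys\<in>J. ys j = y}. Q \<theta> ys) = P j \<theta> y" using Q by (simp add: X_def)
  qed
  define rs where "rs Q = (\<lambda>\<theta> ys. if ys \<in> J then Q \<theta> ys else 0)" for Q :: "'s\<Rightarrow>(nat\<Rightarrow>'y)\<Rightarrow>real"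
  have rsX: "rs Q \<in> X" if Q: "Q \<in> couplings m Y P" for Q
  proof -
    have d: "is_dist J (Q \<theta>)" for \<theta> using Q by (simp add: couplings_def)
    have le1: "Q \<theta> ys \<le> 1" if "ys \<in> J" for \<theta> ys
    proof -
      have "Q \<theta> ys \<le> sum (Q \<theta>) J" using d that fJ by (intro member_le_sum) (auto simp: is_dist_def)
      then show ?thesis using d by (simp add: is_dist_def)
    qed
    have "\<forall>\<theta> ys. rs Q \<theta> ys \<in> B ys" using d le1 by (auto simp: rs_def B_def is_dist_def)
    moreover have "\<forall>\<theta>. (\<Sum>ys\<in>J. 1 * rs Q \<theta> ys) = 1" using d by (simp add: rs_def is_dist_def)
    moreover have "\<forall>\<theta>. \<forall>j\<in>{..<m}. \<forall>y\<in>Y j. (\<Sum>ys\<in>{ys\<in>J. ys j = y}. 1 * rs Q \<theta> ys) = P j \<theta> y"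
    proof (intro allI ballI)
      fix \<theta> j y assume "j \<in> {..<m}" "y \<in> Y j"
      then have "(\<Sum>ys\<in>{ys\<in>J. ys j = y}. Q \<theta> ys) = P j \<theta> y" using Q by (simp add: couplings_def)
      moreover have "(\<Sum>ys\<in>{ys\<in>J. ys j = y}. 1 * rs Q \<theta> ys) = (\<Sum>ys\<in>{ys\<in>J. ys j = y}. Q \<theta> ys)"
        by (intro sum.cong) (auto simp: rs_def)
      ultimately show "(\<Sum>ys\<in>{ys\<in>J. ys j = y}. 1 * rs Q \<theta> ys) = P j \<theta> y" by simp
    qed
    ultimately show ?thesis unfolding X_def by blast
  qed
  have rs_pay: "payoff J (rs Q) A u \<sigma> = payoff J Q A u \<sigma>" for Q \<sigma>
    by (rule payoff_cong_Q) (simp add: rs_def)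
  have neX: "X \<noteq> {}" using rsX[OF Qs_coupling] by blast
  define PS where "PS = PiE J (\<lambda>_. A)"
  have fPS: "finite PS" unfolding PS_def using fA by (intro finite_PiE[OF fJ])
  define F where "F s Q = payoff J Q A u (pure s) - (L - \<epsilon>)"
    for s :: "(nat \<Rightarrow> 'y) \<Rightarrow> 'a" and Q :: "'s\<Rightarrow>(nat\<Rightarrow>'y)\<Rightarrow>real"
  define mixQ where "mixQ t Q1 Q2 = (\<lambda>\<theta> ys. (1 - t) * Q1 \<theta> ys + t * Q2 \<theta> ys)"
    for t :: real and Q1 Q2 :: "'s\<Rightarrow>(nat\<Rightarrow>'y)\<Rightarrow>real"
  have alt: "(\<exists>Q\<in>X. \<forall>s\<in>PS. F s Q \<le> 0) \<or>
         (\<exists>l. (\<forall>s\<in>PS. 0 \<le> l s) \<and> sum l PS = 1 \<and> (\<forall>Q\<in>X. 0 < (\<Sum>s\<in>PS. l s * F s Q)))"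
  proof (rule alternative[where mix = mixQ, OF cX neX fPS])
    show "continuous_on X (F s)" for s unfolding F_def payoff_def by (intro continuous_intros)
    fix t :: real and Q1 Q2 assume t: "0 \<le> t" "t \<le> 1" and Q: "Q1 \<in> X" "Q2 \<in> X"
    show "mixQ t Q1 Q2 \<in> X"
      unfolding X_def
    proof (intro CollectI conjI allI ballI impI)
      fix \<theta> ys
      show "mixQ t Q1 Q2 \<theta> ys \<in> B ys"
      proof (cases "ys \<in> J")
        case True
        have "Q1 \<theta> ys \<in> B ys" "Q2 \<theta> ys \<in> B ys" using XB Q by blast+
        then have "Q1 \<theta> ys \<in> {0..1}" "Q2 \<theta> ys \<in> {0..1}" using True by (auto simp: B_def)
        then have "(1 - t) * Q1 \<theta> ys + t * Q2 \<theta> ys \<in> {0..1}" using t by (intro conv01)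
        then show ?thesis using True unfolding mixQ_def B_def by simp
      next
        case False
        have "Q1 \<theta> ys \<in> B ys" "Q2 \<theta> ys \<in> B ys" using XB Q by blast+
        then have "Q1 \<theta> ys = 0" "Q2 \<theta> ys = 0" using False by (auto simp: B_def)
        then show ?thesis using False by (simp add: B_def mixQ_def)
      qed
    next
      fix \<theta>
      have "(\<Sum>ys\<in>J. 1 * mixQ t Q1 Q2 \<theta> ys) = (1 - t) * (\<Sum>ys\<in>J. 1 * Q1 \<theta> ys) + t * (\<Sum>ys\<in>J. 1 * Q2 \<theta> ys)"
        unfolding mixQ_def by (rule sum_mix1)
      then show "(\<Sum>ys\<in>J. 1 * mixQ t Q1 Q2 \<theta> ys) = 1" using Q by (simp add: X_def)
    next
      fix \<theta> j y assume j: "j \<in> {..<m}" and y: "y \<in> Y j"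
      have "(\<Sum>ys\<in>{ys\<in>J. ys j = y}. 1 * mixQ t Q1 Q2 \<theta> ys) =
          (1 - t) * (\<Sum>ys\<in>{ys\<in>J. ys j = y}. 1 * Q1 \<theta> ys) + t * (\<Sum>ys\<in>{ys\<in>J. ys j = y}. 1 * Q2 \<theta> ys)"
        unfolding mixQ_def by (rule sum_mix1)
      also have "\<dots> = (1 - t) * P j \<theta> y + t * P j \<theta> y" using Q j y unfolding X_def by auto
      finally show "(\<Sum>ys\<in>{ys\<in>J. ys j = y}. 1 * mixQ t Q1 Q2 \<theta> ys) = P j \<theta> y" by (simp add: algebra_simps)
    qed
    fix s
    show "F s (mixQ t Q1 Q2) = (1 - t) * F s Q1 + t * F s Q2"
      unfolding F_def mixQ_def payoff_lin_Q by (simp add: algebra_simps)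
  qed
  show ?thesis
  proof (cases "\<exists>Q\<in>X. \<forall>s\<in>PS. F s Q \<le> 0")
    case True
    then obtain Q where Q: "Q \<in> X" and le: "\<forall>s\<in>PS. F s Q \<le> 0" by blast
    obtain s0 where s0: "\<And>y. s0 y \<in> A" "payoff J Q A u (pure s0) = G J Q A u"
      using payoff_best[OF fA neA] by blast
    define s1 where "s1 = restrict s0 J"
    have s1PS: "s1 \<in> PS" unfolding s1_def PS_def using s0(1) by auto
    have "payoff J Q A u (pure s1) = payoff J Q A u (pure s0)"
      by (rule payoff_cong_sigma) (simp add: s1_def pure_def fun_eq_iff)
    then have "F s1 Q = G J Q A u - (L - \<epsilon>)" using s0(2) by (simp add: F_def)
    moreover have "L \<le> G J Q A u" unfolding L_def
      using coupling_ge_R[OF XC[OF Q] sup fA neA fYa] .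
    ultimately have "F s1 Q > 0" using eps by linarith
    then show ?thesis using le s1PS by fastforce
  next
    case False
    then obtain l where l0: "\<forall>s\<in>PS. 0 \<le> l s" and l1: "sum l PS = 1"
      and lpos: "\<forall>Q\<in>X. 0 < (\<Sum>s\<in>PS. l s * F s Q)" using alt by blast
    define \<sigma>b where "\<sigma>b = (\<lambda>ys a. \<Sum>s\<in>PS. l s * pure s ys a)"
    have \<sigma>bS: "\<sigma>b \<in> strategies J A"
      unfolding strategies_def
    proof (intro CollectI ballI)
      fix ys assume ys: "ys \<in> J"
      show "is_dist A (\<sigma>b ys)" unfolding is_dist_def
      proof
        show "\<forall>a\<in>A. 0 \<le> \<sigma>b ys a" unfolding \<sigma>b_def using l0
          by (auto intro!: sum_nonneg simp: pure_def)
        have "sum (\<sigma>b ys) A = (\<Sum>s\<in>PS. l s * sum (pure s ys) A)"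
          unfolding \<sigma>b_def by (simp add: sum_distrib_left) (rule sum.swap)
        also have "\<dots> = (\<Sum>s\<in>PS. l s)"
        proof (intro sum.cong refl)
          fix s assume "s \<in> PS"
          then have "s ys \<in> A" using ys by (auto simp: PS_def)
          then have "sum (pure s ys) A = 1" using fA by (simp add: pure_def)
          then show "l s * sum (pure s ys) A = l s" by simp
        qed
        finally show "sum (\<sigma>b ys) A = 1" using l1 by simp
      qed
    qed
    have payb: "payoff J Q A u \<sigma>b > L - \<epsilon>" if Q: "Q \<in> X" for Q
    proof -
      have "(\<Sum>s\<in>PS. l s * F s Q) = (\<Sum>s\<in>PS. l s * payoff J Q A u (pure s)) - (\<Sum>s\<in>PS. l s) * (L - \<epsilon>)"
        unfolding F_def by (simp add: right_diff_distrib sum_subtractf sum_distrib_right)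
      also have "(\<Sum>s\<in>PS. l s * payoff J Q A u (pure s)) = payoff J Q A u \<sigma>b"
        unfolding \<sigma>b_def by (rule payoff_mix_sigma[symmetric])
      finally show ?thesis using lpos Q l1 by fastforce
    qed
    have cne: "couplings m Y P \<noteq> {}" using Qs_coupling by blast
    have "L - \<epsilon> \<le> (INF Q\<in>couplings m Y P. payoff J Q A u \<sigma>b)"
    proof (rule cINF_greatest[OF cne])
      fix Q assume "Q \<in> couplings m Y P"
      then show "L - \<epsilon> \<le> payoff J Q A u \<sigma>b" using payb[OF rsX] rs_pay by (metis less_imp_le)
    qed
    also have "\<dots> \<le> valueM m Y P A u"
      unfolding valueM_def
    proof (rule cSUP_upper[OF \<sigma>bS])
      show "bdd_above ((\<lambda>\<sigma>. INF Q\<in>couplings m Y P. payoff J Q A u \<sigma>) ` strategies J A)"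
      proof (rule bdd_aboveI)
        fix x assume "x \<in> (\<lambda>\<sigma>. INF Q\<in>couplings m Y P. payoff J Q A u \<sigma>) ` strategies J A"
        then obtain \<sigma> where \<sigma>: "\<sigma> \<in> strategies J A" and x: "x = (INF Q\<in>couplings m Y P. payoff J Q A u \<sigma>)" by blast
        have "x \<le> payoff J Qs A u \<sigma>" using INF_le[OF Qs_coupling fA \<sigma>] x by simp
        also have "\<dots> \<le> G Z R A u" using Qs_upper[OF fA neA \<sigma>] .
        finally show "x \<le> G Z R A u" .
      qed
    qed
    finally show ?thesis unfolding L_def .
  qed
qed

end



theorem proposition1:
  fixes A :: "'a set" and u :: "'s::finite \<Rightarrow> 'a \<Rightarrow> real"
    and m :: nat and Y :: "nat \<Rightarrow> 'y set" and P :: "nat \<Rightarrow> 's \<Rightarrow> 'y \<Rightarrow> real"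
    and Z :: "'z set" and R :: "'s \<Rightarrow> 'z \<Rightarrow> real"
  assumes "card (UNIV :: 's set) = 2"
    and "finite A" and "A \<noteq> {}"
    and "0 < m"
    and "\<forall>j<m. is_experiment (Y j) (P j)"
    and "blackwell_sup m Y P Z R"
  shows "valueM m Y P A u = value1 Z R A u"
proof -
  have exR: "is_experiment Z R" and mi: "\<forall>j<m. more_informative Z R (Y j) (P j)"
    using assms(6) unfolding blackwell_sup_def by blast+
  have "\<forall>j. \<exists>K. j < m \<longrightarrow> (\<forall>z\<in>Z. is_dist (Y j) (K z)) \<and> (\<forall>\<theta>. \<forall>y\<in>Y j. (\<Sum>z\<in>Z. R \<theta> z * K z y) = P j \<theta> y)"
    using blackwell_garbling assms(5) exR mi by blast
  then obtain KK where KK: "\<forall>j. j < m \<longrightarrow> (\<forall>z\<in>Z. is_dist (Y j) (KK j z)) \<and> (\<forall>\<theta>. \<forall>y\<in>Y j. (\<Sum>z\<in>Z. R \<theta> z * KK j z y) = P j \<theta> y)"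
    by metis
  interpret q: qstar m Y P Z R KK
    using assms(5) exR KK by unfold_locales blast+
  have up: "valueM m Y P A u \<le> G Z R A u" using q.upper[OF assms(2,3)] .
  have lo: "G Z R A u \<le> valueM m Y P A u"
  proof (rule field_le_epsilon)
    fix e :: real assume "0 < e"
    then have "G Z R A u - e \<le> valueM m Y P A u" using q.lower[OF assms(2,3,6), of e u] by blast
    then show "G Z R A u \<le> valueM m Y P A u + e" by linarith
  qed
  have "value1 Z R A u = G Z R A u" by (rule value1_eq[OF assms(2,3)])
  then show ?thesis using up lo by linarith
qed


end
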